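(* For all $\theta_1,\theta_2\in\mathbb{R}$ and all choices of signs, $g^{A,\theta_1,\theta_2}=g^{A,\pm\theta_1,\pm\theta_2}$. Moreover, for every $\theta_1\in\mathbb{R}$, $g^{A,\theta_1,-\theta_1}=g^{E,\theta_1,-\theta_1}=g^{A,\theta_1}$.
   Context: For $\theta\in\mathbb{R}$ define $\varphi_\theta:\mathrm{SPD}_n\to\mathrm{Sym}_n$ by $\varphi_\theta=\frac1\theta\mathrm{pow}_\theta$ if $\theta\neq0$ and $\varphi_0=\log$, where $\mathrm{pow}_\theta=\exp\circ(\theta\log)$ is the matrix power and $\log$ the symmetric matrix logarithm; $\partial_X\varphi_\theta(\Sigma)$ is the differential at $\Sigma$ applied to $X\in\mathrm{Sym}_n\cong T_\Sigma\mathrm{SPD}_n$. Mixed-power-Euclidean: $g^{E,\theta_1,\theta_2}_\Sigma(X,Y)=\mathrm{tr}(\partial_X\varphi_{\theta_1}(\Sigma)\,\partial_Y\varphi_{\theta_2}(\Sigma))$. Mixed-power-affine: with $\theta=(\theta_1+\theta_2)/2$, $g^{A,\theta_1,\theta_2}_\Sigma(X,Y)=\mathrm{tr}(\Sigma^{-\theta}\,\partial_X\varphi_{\theta_1}(\Sigma)\,\Sigma^{-\theta}\,\partial_Y\varphi_{\theta_2}(\Sigma))$. Power-affine metric: $g^{A,\theta}=g^{A,\theta,\theta}$, i.e. $g^{A,\theta}_\Sigma(X,Y)=\mathrm{tr}(\Sigma^{-\theta}\partial_X\varphi_\theta(\Sigma)\Sigma^{-\theta}\partial_Y\varphi_\theta(\Sigma))$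 (affine-invariant for $\theta=1$, log-Euclidean for $\theta=0$). *)

theory Defs
  imports "HOL-Analysis.Analysis"
begin

definition sym_mat :: "real^'n^'n \<Rightarrow> bool" where
  "sym_mat A \<longleftrightarrow> transpose A = A"

definition spd :: "real^'n^'n \<Rightarrow> bool" where
  "spd A \<longleftrightarrow> sym_mat A \<and> (\<forall>x. x \<noteq> 0 \<longrightarrow> x \<bullet> (A *v x) > 0)"

definition diag_mat :: "('n \<Rightarrow> real) \<Rightarrow> real^'n^'n" where
  "diag_mat d = (\<chi> i j. if i = j then d i else 0)"

definition spec_fun :: "(real \<Rightarrow> real) \<Rightarrow> real^'n^'n \<Rightarrow> real^'n^'n" where
  "spec_fun f A = (THE B. \<exists>U d. orthogonal_matrix U \<and> A = U ** diag_mat d ** transpose U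
                       \<and> B = U ** diag_mat (f \<circ> d) ** transpose U)"

definition mexp :: "real^'n^'n \<Rightarrow> real^'n^'n" where
  "mexp A = spec_fun exp A"

definition mlog :: "real^'n^'n \<Rightarrow> real^'n^'n" where
  "mlog A = spec_fun ln A"

definition mpow :: "real \<Rightarrow> real^'n^'n \<Rightarrow> real^'n^'n" where
  "mpow \<theta> A = mexp (\<theta> *\<^sub>R mlog A)"

definition phi :: "real \<Rightarrow> real^'n^'n \<Rightarrow> real^'n^'n" where
  "phi \<theta> A = (if \<theta> = 0 then mlog A else (1 / \<theta>) *\<^sub>R mpow \<theta> A)"

definition dphi :: "real \<Rightarrow> real^'n^'n \<Rightarrow> real^'n^'n \<Rightarrow> real^'n^'n" where
  "dphi \<theta> S X = (THE D. ((\<lambda>t. phi \<theta> (S + t *\<^sub>R X)) has_vector_derivative D) (at 0))"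

definition gE :: "real \<Rightarrow> real \<Rightarrow> real^'n^'n \<Rightarrow> real^'n^'n \<Rightarrow> real^'n^'n \<Rightarrow> real" where
  "gE \<theta>1 \<theta>2 S X Y = trace (dphi \<theta>1 S X ** dphi \<theta>2 S Y)"

definition gA :: "real \<Rightarrow> real \<Rightarrow> real^'n^'n \<Rightarrow> real^'n^'n \<Rightarrow> real^'n^'n \<Rightarrow> real" where
  "gA \<theta>1 \<theta>2 S X Y = (let \<theta> = (\<theta>1 + \<theta>2) / 2 in
     trace (mpow (-\<theta>) S ** dphi \<theta>1 S X ** mpow (-\<theta>) S ** dphi \<theta>2 S Y))"

definition gA1 :: "real \<Rightarrow> real^'n^'n \<Rightarrow> real^'n^'n \<Rightarrow> real^'n^'n \<Rightarrow> real" where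
  "gA1 \<theta> = gA \<theta> \<theta>"

end

theory Submission imports Defs begin
lemma sym_inner: assumes "sym_mat A" shows "(A *v x) \<bullet> y = x \<bullet> (A *v (y::real^'n))"
proof -
  have "(A *v x) = x v* A" using assms unfolding sym_mat_def
    by (metis vector_transpose_matrix)
  thus ?thesis by (simp add: dot_lmul_matrix)
qed

lemma mult_diag_right: "(M ** diag_mat d) $ i $ j = M$i$j * d j"
proof -
  have "(M ** diag_mat d) $ i $ j = (\<Sum>k\<in>UNIV. M$i$k * (if k = j then d k else 0))"
    by (simp add: matrix_matrix_mult_def diag_mat_def)
  also have "\<dots> = (\<Sum>k\<in>UNIV. (if k = j then M$i$k * d k else 0))"
    by (intro sum.cong) auto
  finally show ?thesis by simp
qed

lemma mult_diag_left: "(diag_mat d ** M) $ i $ j = d i * M$i$j"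
proof -
  have "(diag_mat d ** M) $ i $ j = (\<Sum>k\<in>UNIV. (if i = k then d i else 0) * M$k$j)"
    by (simp add: matrix_matrix_mult_def diag_mat_def)
  also have "\<dots> = (\<Sum>k\<in>UNIV. (if k = i then d i * M$k$j else 0))"
    by (intro sum.cong) auto
  finally show ?thesis by simp
qed

lemma rayleigh_max:
  fixes A :: "real^'n^'n"
  assumes A: "sym_mat A" and V: "subspace V" and inv: "\<forall>x\<in>V. A *v x \<in> V" and nz: "\<exists>x\<in>V. x \<noteq> 0"
  shows "\<exists>v\<in>V. norm v = 1 \<and> A *v v = (v \<bullet> (A *v v)) *\<^sub>R v"
proof -
  define q where "q x = x \<bullet> (A *v x)" for x :: "real^'n"
  define K where "K = V \<inter> sphere 0 1"
  have "compact K" unfolding K_def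
    by (intro closed_Int_compact closed_subspace V compact_sphere)
  obtain x where x: "x \<in> V" "x \<noteq> 0" using nz by blast
  have "(1/norm x) *\<^sub>R x \<in> K" unfolding K_def using x V by (simp add: subspace_scale)
  hence "K \<noteq> {}" by blast
  have "continuous_on K q" unfolding q_def
    by (intro continuous_intros continuous_on_id linear_continuous_on matrix_vector_mul_linear)
  then obtain v where v: "v \<in> K" "\<And>y. y \<in> K \<Longrightarrow> q y \<le> q v"
    using continuous_attains_sup[OF \<open>compact K\<close> \<open>K \<noteq> {}\<close>] by blast
  have vV: "v \<in> V" and nv: "norm v = 1" using v(1) unfolding K_def by auto
  define l where "l = q v"
  have qle: "q y \<le> l * norm y ^ 2" if "y \<in> V" for y
  proof (cases "y = 0")
    case True thus ?thesis by (simp add: q_def)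
  next
    case False
    have "(1/norm y) *\<^sub>R y \<in> K" unfolding K_def using that False V by (simp add: subspace_scale)
    hence "q ((1/norm y) *\<^sub>R y) \<le> l" using v(2) l_def by blast
    moreover have "q ((1/norm y) *\<^sub>R y) = q y / norm y ^ 2"
      by (simp add: q_def matrix_vector_mult_scaleR power2_eq_square)
    ultimately show ?thesis using False by (simp add: divide_le_eq)
  qed
  have orth: "w \<bullet> (A *v v) = 0" if w: "w \<in> V" "w \<bullet> v = 0" for w
  proof -
    define p where "p = w \<bullet> (A *v v)"
    define E where "E = q w - l * norm w ^ 2"
    have key: "2 * s * p + s^2 * E \<le> 0" for s
    proof -
      have "v + s *\<^sub>R w \<in> V" using vV w V by (simp add: subspace_add subspace_scale)
      hence "q (v + s *\<^sub>R w) \<le> l * norm (v + s *\<^sub>R w) ^ 2" by (rule qle)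
      moreover have "q (v + s *\<^sub>R w) = l + 2 * s * p + s^2 * q w"
      proof -
        have "v \<bullet> (A *v w) = p" unfolding p_def using sym_inner[OF A, of v w]
          by (simp add: inner_commute)
        thus ?thesis unfolding q_def l_def p_def
          by (simp add: matrix_vector_right_distrib matrix_vector_mult_scaleR inner_add_left inner_add_right
              power2_eq_square algebra_simps)
      qed
      moreover have "norm (v + s *\<^sub>R w) ^ 2 = 1 + s^2 * norm w ^ 2"
      proof -
        have vv: "v \<bullet> v = 1" using nv by (simp add: dot_square_norm)
        have ww: "w \<bullet> w = norm w ^ 2" by (simp add: dot_square_norm)
        have "norm (v + s *\<^sub>R w) ^ 2 = (v + s *\<^sub>R w) \<bullet> (v + s *\<^sub>R w)" by (simp add: dot_square_norm)
        also have "\<dots> = v \<bullet> v + 2 * s * (w \<bullet> v) + s^2 * (w \<bullet> w)"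
          by (simp add: inner_add_left inner_add_right inner_commute power2_eq_square algebra_simps)
        finally show ?thesis using vv ww w(2) by simp
      qed
      ultimately show ?thesis unfolding E_def by (simp add: algebra_simps)
    qed
    define C where "C = \<bar>E\<bar> + 1"
    have C: "C > 0" "2 * C + E > 0" unfolding C_def by auto
    have "2 * (p/C) * p + (p/C)^2 * E \<le> 0" by (rule key)
    hence "(2 * (p/C) * p + (p/C)^2 * E) * C^2 \<le> 0" by (simp add: mult_nonpos_nonneg)
    moreover have "(2 * (p/C) * p + (p/C)^2 * E) * C^2 = p^2 * (2 * C + E)"
      using C by (simp add: field_simps power2_eq_square)
    ultimately have "p^2 * (2 * C + E) \<le> 0" by simp
    with C have "p^2 \<le> 0" by (simp add: mult_le_0_iff)
    thus ?thesis unfolding p_def by simp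
  qed
  define u where "u = A *v v - l *\<^sub>R v"
  have uV: "u \<in> V" unfolding u_def using inv vV V by (simp add: subspace_diff subspace_scale)
  have vv: "v \<bullet> v = 1" using nv by (simp add: dot_square_norm)
  have "v \<bullet> u = 0" unfolding u_def l_def q_def
    by (simp add: inner_diff_right vv)
  hence "u \<bullet> v = 0" by (simp add: inner_commute)
  hence "u \<bullet> (A *v v) = 0" using orth uV by blast
  hence "u \<bullet> u = 0" using \<open>u \<bullet> v = 0\<close>
    by (simp add: u_def inner_diff_right) 
  hence "u = 0" by simp
  thus ?thesis using vV nv unfolding u_def l_def q_def by auto
qed
lemma spectral_sub:
  fixes A :: "real^'n^'n"
  assumes A: "sym_mat A"
  shows "subspace V \<Longrightarrow> (\<forall>x\<in>V. A *v x \<in> V) \<Longrightarrow>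
    \<exists>B. B \<subseteq> V \<and> pairwise orthogonal B \<and> (\<forall>b\<in>B. norm b = 1 \<and> A *v b = (b \<bullet> (A *v b)) *\<^sub>R b) \<and> V \<subseteq> span B"
proof (induct "dim V" arbitrary: V rule: less_induct)
  case less
  show ?case
  proof (cases "\<exists>x\<in>V. x \<noteq> 0")
    case False
    hence "V \<subseteq> span {}" by auto
    thus ?thesis by (intro exI[of _ "{}"]) auto
  next
    case True
    obtain v where v: "v \<in> V" "norm v = 1" "A *v v = (v \<bullet> (A *v v)) *\<^sub>R v"
      using rayleigh_max[OF A less(2,3) True] by blast
    have vv: "v \<bullet> v = 1" using v(2) by (simp add: dot_square_norm)
    define V' where "V' = V \<inter> {x. v \<bullet> x = 0}"
    have sV': "subspace V'" unfolding V'_def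
      by (intro subspace_inter less(2) subspace_hyperplane)
    have iV': "\<forall>x\<in>V'. A *v x \<in> V'"
    proof
      fix x assume x: "x \<in> V'"
      have "v \<bullet> (A *v x) = (A *v v) \<bullet> x" using sym_inner[OF A, of v x] by simp
      also have "\<dots> = 0" using x unfolding V'_def by (subst v(3)) simp
      finally show "A *v x \<in> V'" using x less(3) unfolding V'_def by auto
    qed
    have "V' \<subset> V" unfolding V'_def using v(1) vv by (metis (mono_tags, lifting) Int_iff inf_le1 mem_Collect_eq psubsetI zero_neq_one)
    hence "span V' \<subset> span V" using sV' less(2) by (metis span_eq_iff)
    hence "dim V' < dim V" by (rule dim_psubset)
    from less(1)[OF this sV' iV'] obtain B' where B': "B' \<subseteq> V'" "pairwise orthogonal B'"
      "\<forall>b\<in>B'. norm b = 1 \<and> A *v b = (b \<bullet> (A *v b)) *\<^sub>R b" "V' \<subseteq> span B'" by blast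
    define B where "B = insert v B'"
    have "B \<subseteq> V" unfolding B_def using B'(1) v(1) V'_def by auto
    moreover have "pairwise orthogonal B"
    proof -
      have "\<forall>y\<in>B'. y \<noteq> v \<longrightarrow> orthogonal v y \<and> orthogonal y v"
      proof (intro ballI impI)
        fix y assume "y \<in> B'" "y \<noteq> v"
        hence "v \<bullet> y = 0" using B'(1) unfolding V'_def by auto
        thus "orthogonal v y \<and> orthogonal y v" unfolding orthogonal_def by (simp add: inner_commute)
      qed
      thus ?thesis using B'(2) unfolding B_def by (simp add: pairwise_insert)
    qed
    moreover have "\<forall>b\<in>B. norm b = 1 \<and> A *v b = (b \<bullet> (A *v b)) *\<^sub>R b"
      unfolding B_def using B'(3) v by auto
    moreover have "V \<subseteq> span B"
    proof
      fix x assume x: "x \<in> V"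
      have "x - (v \<bullet> x) *\<^sub>R v \<in> V'" unfolding V'_def using x v(1) less(2)
        by (simp add: subspace_diff subspace_scale inner_diff_right vv)
      hence "x - (v \<bullet> x) *\<^sub>R v \<in> span B" using B'(4) span_mono[of B' B] unfolding B_def by auto
      moreover have "(v \<bullet> x) *\<^sub>R v \<in> span B" unfolding B_def by (intro span_mul span_base) simp
      ultimately have "(x - (v \<bullet> x) *\<^sub>R v) + (v \<bullet> x) *\<^sub>R v \<in> span B" by (rule span_add)
      thus "x \<in> span B" by simp
    qed
    ultimately show ?thesis by blast
  qed
qed

lemma spectral:
  fixes A :: "real^'n^'n"
  assumes A: "sym_mat A"
  shows "\<exists>U d. orthogonal_matrix U \<and> A = U ** diag_mat d ** transpose U"
proof -
  obtain B where B: "pairwise orthogonal B" "\<forall>b\<in>B. norm b = 1 \<and> A *v b = (b \<bullet> (A *v b)) *\<^sub>R b"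
    "UNIV \<subseteq> span B"
    using spectral_sub[OF A subspace_UNIV] by auto
  have "0 \<notin> B" using B(2) by force
  hence indB: "independent B" using B(1) pairwise_orthogonal_independent by blast
  have finB: "finite B" using indB by (rule finiteI_independent)
  have "span B = UNIV" using B(3) by auto
  hence "card B = CARD('n)" using dim_eq_card_independent[OF indB] dim_span[of B] by simp
  then obtain g where g: "bij_betw g (UNIV::'n set) B"
    by (metis finite_class.finite_UNIV finite_same_card_bij finB)
  have gn: "\<And>i. norm (g i) = 1" and geig: "\<And>i. A *v g i = (g i \<bullet> (A *v g i)) *\<^sub>R g i"
    using bij_betwE [OF g] B(2) by auto
  have go: "\<And>i j. i \<noteq> j \<Longrightarrow> orthogonal (g i) (g j)"
    using B(1) g by (auto simp: pairwise_def bij_betw_def inj_on_def)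
  define U where "U = (\<chi> i j. g j $ i)"
  define d where "d j = g j \<bullet> (A *v g j)" for j
  have oU: "orthogonal_matrix U"
    unfolding U_def by (simp add: orthogonal_matrix_orthonormal_columns column_def gn go)
  have AU: "A ** U = U ** diag_mat d"
  proof -
    have "(A ** U) $ i $ j = (U ** diag_mat d) $ i $ j" for i j
    proof -
      have "(A ** U) $ i $ j = (A *v g j) $ i"
        unfolding matrix_matrix_mult_def matrix_vector_mult_def U_def by simp
      also have "\<dots> = d j * g j $ i"
      proof -
        have e: "A *v g j = d j *\<^sub>R g j" using geig[of j] unfolding d_def .
        show ?thesis by (subst e) simp
      qed
      also have "\<dots> = (U ** diag_mat d) $ i $ j" by (simp add: mult_diag_right U_def)
      finally show ?thesis .
    qed
    thus ?thesis by (simp add: vec_eq_iff)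
  qed
  have "A = A ** (U ** transpose U)" using oU unfolding orthogonal_matrix_def by simp
  also have "\<dots> = U ** diag_mat d ** transpose U" by (simp add: matrix_mul_assoc AU)
  finally show ?thesis using oU by blast
qed

lemma orth_TU: "orthogonal_matrix U \<Longrightarrow> transpose U ** U = mat 1"
  and orth_UT: "orthogonal_matrix U \<Longrightarrow> U ** transpose U = mat 1"
  by (simp_all add: orthogonal_matrix_def)

lemma orth_L1: "orthogonal_matrix U \<Longrightarrow> X ** transpose U ** U = X"
  by (metis matrix_mul_assoc matrix_mul_rid orth_TU)
lemma orth_L2: "orthogonal_matrix U \<Longrightarrow> X ** U ** transpose U = X"
  by (metis matrix_mul_assoc matrix_mul_rid orth_UT)

lemma spec_comm:
  fixes U V :: "real^'n^'n"
  assumes U: "orthogonal_matrix U" and V: "orthogonal_matrix V"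
    and eq: "U ** diag_mat d ** transpose U = V ** diag_mat e ** transpose V"
  shows "U ** diag_mat (f \<circ> d) ** transpose U = V ** diag_mat (f \<circ> e) ** transpose V"
proof -
  define W where "W = transpose V ** U"
  have "W ** diag_mat d = transpose V ** (U ** diag_mat d ** transpose U) ** U"
    unfolding W_def by (simp add: matrix_mul_assoc orth_L1[OF U])
  also have "\<dots> = transpose V ** (V ** diag_mat e ** transpose V) ** U" by (simp add: eq)
  also have "\<dots> = diag_mat e ** W"
    unfolding W_def by (simp add: matrix_mul_assoc orth_TU[OF V])
  finally have WD: "W ** diag_mat d = diag_mat e ** W" .
  have WF: "W ** diag_mat (f \<circ> d) = diag_mat (f \<circ> e) ** W"
  proof -
    have "(W ** diag_mat (f \<circ> d)) $ i $ j = (diag_mat (f \<circ> e) ** W) $ i $ j" for i j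
    proof -
      have "W$i$j * d j = e i * W$i$j" using arg_cong[OF WD, of "\<lambda>M. M$i$j"]
        by (simp add: mult_diag_right mult_diag_left)
      hence "W$i$j = 0 \<or> d j = e i" by auto
      hence "W$i$j * f (d j) = f (e i) * W$i$j" by auto
      thus ?thesis by (simp add: mult_diag_right mult_diag_left)
    qed
    thus ?thesis by (simp add: vec_eq_iff)
  qed
  have "U ** diag_mat (f \<circ> d) ** transpose U = (V ** transpose V) ** U ** diag_mat (f \<circ> d) ** transpose U"
    by (simp add: orth_UT[OF V])
  also have "\<dots> = V ** (W ** diag_mat (f \<circ> d)) ** transpose U"
    unfolding W_def by (simp add: matrix_mul_assoc)
  also have "\<dots> = V ** diag_mat (f \<circ> e) ** (W ** transpose U)"
    unfolding WF by (simp add: matrix_mul_assoc)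
  also have "W ** transpose U = transpose V"
    unfolding W_def by (simp add: matrix_mul_assoc orth_L2[OF U])
  finally show ?thesis by (simp add: matrix_mul_assoc comp_def)
qed

lemma spec_fun_eq:
  assumes U: "orthogonal_matrix U" and A: "A = U ** diag_mat d ** transpose U"
  shows "spec_fun f A = U ** diag_mat (f \<circ> d) ** transpose U"
  unfolding spec_fun_def
proof (rule the_equality)
  show "\<exists>Ua da. orthogonal_matrix Ua \<and> A = Ua ** diag_mat da ** transpose Ua \<and>
      U ** diag_mat (f \<circ> d) ** transpose U = Ua ** diag_mat (f \<circ> da) ** transpose Ua"
    using U A by blast
next
  fix B assume "\<exists>Ua da. orthogonal_matrix Ua \<and> A = Ua ** diag_mat da ** transpose Ua \<and>
      B = Ua ** diag_mat (f \<circ> da) ** transpose Ua"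
  then obtain V e where V: "orthogonal_matrix V" "A = V ** diag_mat e ** transpose V"
    "B = V ** diag_mat (f \<circ> e) ** transpose V" by blast
  show "B = U ** diag_mat (f \<circ> d) ** transpose U"
    using spec_comm[OF V(1) U, of e d f] V A by simp
qed

lemma norm_sq_vec: "norm (x::real^'n) ^ 2 = (\<Sum>i\<in>UNIV. (x$i)^2)"
  unfolding power2_norm_eq_inner inner_vec_def by (simp add: power2_eq_square)

lemma norm_sq_mat: "norm (A::real^'n^'m) ^ 2 = (\<Sum>i\<in>UNIV. norm (A$i)^2)"
  by (simp add: power2_norm_eq_inner inner_vec_def)

lemma mv_nth: "(A *v x) $ i = A$i \<bullet> (x::real^'n)"
  by (simp add: matrix_vector_mult_def inner_vec_def)

lemma norm_mv: "norm (A *v x) \<le> norm (A::real^'n^'m) * norm (x::real^'n)"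
proof -
  have "norm (A *v x) ^2 = (\<Sum>i\<in>UNIV. ((A$i) \<bullet> x)^2)"
    unfolding norm_sq_vec mv_nth ..
  also have "\<dots> \<le> (\<Sum>i\<in>UNIV. (norm (A$i) * norm x)^2)"
  proof (intro sum_mono)
    fix i have "\<bar>A$i \<bullet> x\<bar> \<le> norm (A$i) * norm x" by (rule Cauchy_Schwarz_ineq2)
    hence "\<bar>A$i \<bullet> x\<bar>^2 \<le> (norm (A$i) * norm x)^2" by (intro power_mono) auto
    thus "(A$i \<bullet> x)^2 \<le> (norm (A$i) * norm x)^2" by simp
  qed
  also have "\<dots> = (norm A * norm x)^2" 
    unfolding power_mult_distrib norm_sq_mat[of A] sum_distrib_right ..
  finally show ?thesis by (rule power2_le_imp_le) simp
qed

lemma norm_transpose: "norm (transpose (Y::real^'n^'m)) = norm Y"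
proof -
  have "norm (transpose Y) ^ 2 = (\<Sum>i\<in>UNIV. \<Sum>j\<in>UNIV. (Y$j$i)^2)"
    unfolding norm_sq_mat norm_sq_vec by (simp add: transpose_def)
  also have "\<dots> = (\<Sum>j\<in>UNIV. \<Sum>i\<in>UNIV. (Y$j$i)^2)" by (rule sum.swap)
  also have "\<dots> = norm Y ^ 2" unfolding norm_sq_mat norm_sq_vec ..
  finally show ?thesis by (simp add: power2_eq_iff_nonneg)
qed

lemma row_mult_transpose: "(Y ** transpose M) $ i = M *v (Y $ i :: real^'n)"
  by (auto simp: vec_eq_iff matrix_matrix_mult_def matrix_vector_mult_def transpose_def intro!: sum.cong)

lemma norm_mult_right:
  fixes M :: "real^'n^'n" and Y :: "real^'n^'m"
  assumes r: "\<And>x. norm (M *v x) \<le> r * norm x" and s: "sym_mat M"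
  shows "norm (Y ** M) \<le> r * norm Y"
proof -
  have h: "norm (M *v axis undefined 1) \<le> r" using r[of "axis undefined 1"] by (simp add: norm_axis_1)
  have r0: "0 \<le> r" by (rule order_trans[OF norm_ge_zero h])
  have "Y ** M = Y ** transpose M" using s by (simp add: sym_mat_def)
  hence "norm (Y ** M) ^ 2 = (\<Sum>i\<in>UNIV. norm (M *v (Y$i)) ^ 2)"
    unfolding norm_sq_mat by (simp add: row_mult_transpose)
  also have "\<dots> \<le> (\<Sum>i\<in>UNIV. (r * norm (Y$i)) ^ 2)"
    by (intro sum_mono power_mono r) auto
  also have "\<dots> = (r * norm Y) ^ 2"
    unfolding power_mult_distrib norm_sq_mat[of Y] sum_distrib_left ..
  finally show ?thesis by (rule power2_le_imp_le) (simp add: r0)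
qed

lemma norm_mult_left:
  fixes M :: "real^'n^'n" and Y :: "real^'m^'n"
  assumes r: "\<And>x. norm (M *v x) \<le> r * norm x" and s: "sym_mat M"
  shows "norm (M ** Y) \<le> r * norm Y"
proof -
  have "norm (M ** Y) = norm (transpose Y ** transpose M)"
    by (metis matrix_transpose_mul norm_transpose)
  also have "\<dots> = norm (transpose Y ** M)" using s by (simp add: sym_mat_def)
  also have "\<dots> \<le> r * norm (transpose Y)" by (rule norm_mult_right[OF r s])
  finally show ?thesis by (simp add: norm_transpose)
qed

lemma polar_bound:
  fixes M :: "real^'n^'n"
  assumes s: "sym_mat M" and r: "\<And>x. \<bar>x \<bullet> (M *v x)\<bar> \<le> r * norm x ^ 2"
  shows "norm (M *v x) \<le> r * norm x"
proof (cases "M *v x = 0")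
  case True
  have "0 \<le> r" using r[of "axis undefined 1"] by (simp add: norm_axis_1)
  thus ?thesis using True by simp
next
  case False
  define y where "y = M *v x"
  have yn: "norm y > 0" using False y_def by simp
  have key: "4 * (z \<bullet> y) \<le> 2 * r * (norm x ^ 2 + norm z ^ 2)" for z
  proof -
    have xz: "x \<bullet> (M *v z) = z \<bullet> y" unfolding y_def using sym_inner[OF s, of x z] sym_inner[OF s, of z x]
      by (simp add: inner_commute)
    have "(x + z) \<bullet> (M *v (x + z)) - (x - z) \<bullet> (M *v (x - z)) = 2 * (x \<bullet> (M *v z)) + 2 * (z \<bullet> y)"
      unfolding y_def by (simp add: matrix_vector_right_distrib matrix_vector_mult_diff_distrib
          inner_add_left inner_add_right inner_diff_left inner_diff_right)
    hence "4 * (z \<bullet> y) = (x + z) \<bullet> (M *v (x + z)) - (x - z) \<bullet> (M *v (x - z))" using xz by simp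
    also have "\<dots> \<le> r * norm (x + z) ^ 2 + r * norm (x - z) ^ 2"
      using r[of "x+z"] r[of "x-z"] by linarith
    also have "norm (x + z) ^ 2 + norm (x - z) ^ 2 = 2 * (norm x ^ 2 + norm z ^ 2)"
      by (simp add: dot_square_norm[symmetric] inner_add_left inner_add_right inner_diff_left inner_diff_right inner_commute)
    hence "r * norm (x + z) ^ 2 + r * norm (x - z) ^ 2 = 2 * r * (norm x ^ 2 + norm z ^ 2)"
      by (metis distrib_left mult.assoc mult.commute)
    finally show ?thesis .
  qed
  define z where "z = (norm x / norm y) *\<^sub>R y"
  have "z \<bullet> y = norm x * norm y" unfolding z_def using yn
    by (simp add: dot_square_norm power2_eq_square)
  moreover have "norm z = norm x" unfolding z_def using yn by simp
  ultimately have "4 * (norm x * norm y) \<le> 4 * r * norm x ^ 2" using key[of z] by simp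
  hence "norm x * norm y \<le> norm x * (r * norm x)" by (simp add: power2_eq_square algebra_simps)
  moreover have "norm x > 0" using False by auto
  ultimately show ?thesis unfolding y_def by simp
qed

lemma mm_add_rdistrib: "((A::real^'n^'n) + B) ** C = A ** C + B ** C"
  by (simp add: vec_eq_iff matrix_matrix_mult_def sum.distrib distrib_right)

lemma mm_bilinear: "bounded_bilinear ((**) :: real^'n^'n \<Rightarrow> real^'n^'n \<Rightarrow> real^'n^'n)"
proof -
  have "bilinear ((**) :: real^'n^'n \<Rightarrow> real^'n^'n \<Rightarrow> real^'n^'n)"
    unfolding bilinear_def
    by (auto intro!: linearI simp: matrix_add_ldistrib mm_add_rdistrib matrix_scalar_ac scalar_matrix_assoc)
  thus ?thesis by (simp add: bilinear_conv_bounded_bilinear)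
qed

fun mp :: "real^'n^'n \<Rightarrow> nat \<Rightarrow> real^'n^'n" where
  "mp M 0 = mat 1" | "mp M (Suc k) = M ** mp M k"

fun dmp :: "real^'n^'n \<Rightarrow> real^'n^'n \<Rightarrow> nat \<Rightarrow> real^'n^'n" where
  "dmp M Y 0 = 0" | "dmp M Y (Suc k) = Y ** mp M k + M ** dmp M Y k"

lemma mp_deriv: "((\<lambda>t. mp (M0 + t *\<^sub>R Y) k) has_vector_derivative dmp (M0 + t *\<^sub>R Y) Y k) (at t within T)"
proof (induct k)
  case 0
  show ?case by (simp add: has_vector_derivative_const)
next
  case (Suc k)
  have f: "((\<lambda>t. M0 + t *\<^sub>R Y) has_vector_derivative Y) (at t within T)"
    by (auto intro!: derivative_eq_intros)
  show ?case
    using bounded_bilinear.has_vector_derivative[OF mm_bilinear f Suc]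
    by (simp add: add.commute)
qed

lemma mp_bound_right:
  assumes r: "\<And>x. norm (M *v x) \<le> r * norm x" and s: "sym_mat M" and r0: "0 \<le> r"
  shows "norm (Z ** mp M k) \<le> r ^ k * norm (Z::real^'n^'n)"
proof (induct k arbitrary: Z)
  case 0 thus ?case by simp
next
  case (Suc k)
  have "norm (Z ** mp M (Suc k)) = norm ((Z ** M) ** mp M k)" by (simp add: matrix_mul_assoc)
  also have "\<dots> \<le> r ^ k * norm (Z ** M)" by (rule Suc)
  also have "\<dots> \<le> r ^ k * (r * norm Z)" by (intro mult_left_mono norm_mult_right[OF r s]) (simp add: r0)
  finally show ?case by (simp add: algebra_simps)
qed

lemma mp_bound:
  fixes M :: "real^'n^'n"
  assumes r: "\<And>x. norm (M *v x) \<le> r * norm x" and s: "sym_mat M" and r0: "0 \<le> r"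
  shows "norm (mp M k) \<le> r ^ k * norm (mat 1 :: real^'n^'n)"
  using mp_bound_right[OF r s r0, of "mat 1" k] by simp

lemma dmp_bound:
  assumes r: "\<And>x. norm (M *v x) \<le> r * norm x" and s: "sym_mat M" and r0: "0 \<le> r"
  shows "norm (dmp M Y k) \<le> real k * r ^ (k - 1) * norm (Y::real^'n^'n)"
proof (induct k)
  case 0 thus ?case by simp
next
  case (Suc k)
  have "norm (dmp M Y (Suc k)) \<le> norm (Y ** mp M k) + norm (M ** dmp M Y k)"
    by (simp add: norm_triangle_ineq)
  also have "\<dots> \<le> r ^ k * norm Y + r * (real k * r ^ (k - 1) * norm Y)"
    by (intro add_mono mp_bound_right[OF r s r0] order_trans[OF norm_mult_left[OF r s]]
        mult_left_mono Suc r0)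
  also have "r * (real k * r ^ (k - 1) * norm Y) = real k * r ^ k * norm Y"
    by (cases k) (simp_all add: algebra_simps)
  finally show ?case by (simp add: algebra_simps)
qed

lemma series_deriv:
  fixes M0 Y :: "real^'n^'n" and a :: "nat \<Rightarrow> real"
  assumes d0: "\<delta> > 0" and r0: "0 \<le> r"
    and sM: "\<And>t. sym_mat (M0 + t *\<^sub>R Y)"
    and bnd: "\<And>t x. t \<in> ball 0 \<delta> \<Longrightarrow> norm ((M0 + t *\<^sub>R Y) *v x) \<le> r * norm x"
    and sa: "summable (\<lambda>n. \<bar>a n\<bar> * r ^ n)"
    and sd: "summable (\<lambda>n. \<bar>a n\<bar> * (real n * r ^ (n - 1)))"
  shows "\<exists>g D. (\<forall>t\<in>ball 0 \<delta>. (\<lambda>n. a n *\<^sub>R mp (M0 + t *\<^sub>R Y) n) sums g t) \<and> (g has_vector_derivative D) (at 0)"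
proof -
  define S where "S = ball (0::real) \<delta>"
  define T where "T n t = a n *\<^sub>R dmp (M0 + t *\<^sub>R Y) Y n" for n t
  define \<beta> where "\<beta> n = \<bar>a n\<bar> * (real n * r ^ (n - 1)) * norm Y" for n
  have s\<beta>: "summable \<beta>" unfolding \<beta>_def by (intro summable_mult2 sd)
  have Tb: "norm (T n t) \<le> \<beta> n" if "t \<in> S" for n t
  proof -
    have "norm (T n t) = \<bar>a n\<bar> * norm (dmp (M0 + t *\<^sub>R Y) Y n)" by (simp add: T_def)
    also have "\<dots> \<le> \<bar>a n\<bar> * (real n * r ^ (n - 1) * norm Y)"
      by (intro mult_left_mono dmp_bound bnd sM r0) (use that S_def in auto)
    finally show ?thesis by (simp add: \<beta>_def mult.assoc)
  qed
  have sT: "summable (\<lambda>n. T n t)" if "t \<in> S" for t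
    by (rule summable_comparison_test[OF _ s\<beta>]) (use Tb that in auto)
  define G where "G t = (\<Sum>n. T n t)" for t
  have "\<exists>g. \<forall>x\<in>S. (\<lambda>n. a n *\<^sub>R mp (M0 + x *\<^sub>R Y) n) sums g x \<and>
      (g has_derivative (\<lambda>h. h *\<^sub>R G x)) (at x within S)"
  proof (rule has_derivative_series[where f'="\<lambda>n t h. h *\<^sub>R T n t"])
    show "convex S" unfolding S_def by simp
  next
    fix n x assume "x \<in> S"
    have "((\<lambda>t. mp (M0 + t *\<^sub>R Y) n) has_vector_derivative dmp (M0 + x *\<^sub>R Y) Y n) (at x within S)"
      by (rule mp_deriv)
    from bounded_linear.has_vector_derivative[OF bounded_linear_scaleR_right this, of "a n"]
    show "((\<lambda>t. a n *\<^sub>R mp (M0 + t *\<^sub>R Y) n) has_derivative (\<lambda>h. h *\<^sub>R T n x)) (at x within S)"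
      unfolding has_vector_derivative_def T_def .
  next
    fix e :: real assume e: "e > 0"
    have "(\<lambda>n. \<Sum>i<n. \<beta> i) \<longlonglongrightarrow> suminf \<beta>" by (rule summable_LIMSEQ[OF s\<beta>])
    hence "\<forall>\<^sub>F n in sequentially. dist (\<Sum>i<n. \<beta> i) (suminf \<beta>) < e"
      using e by (rule tendstoD)
    thus "\<forall>\<^sub>F n in sequentially. \<forall>x\<in>S. \<forall>h. norm ((\<Sum>i<n. h *\<^sub>R T i x) - h *\<^sub>R G x) \<le> e * norm h"
    proof (rule eventually_mono, intro ballI allI)
      fix n x h assume n: "dist (\<Sum>i<n. \<beta> i) (suminf \<beta>) < e" and x: "x \<in> S"
      have "G x - (\<Sum>i<n. T i x) = (\<Sum>i. T (i + n) x)"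
        unfolding G_def using suminf_minus_initial_segment[OF sT[OF x], of n] by simp
      hence "norm ((\<Sum>i<n. T i x) - G x) = norm (\<Sum>i. T (i + n) x)"
        by (metis norm_minus_commute)
      also have "\<dots> \<le> (\<Sum>i. \<beta> (i + n))"
        by (rule norm_suminf_le) (use Tb x summable_ignore_initial_segment[OF s\<beta>] in auto)
      also have "\<dots> = suminf \<beta> - (\<Sum>i<n. \<beta> i)" by (rule suminf_minus_initial_segment[OF s\<beta>])
      also have "\<dots> \<le> e" using n by (simp add: dist_real_def)
      finally have ne: "norm ((\<Sum>i<n. T i x) - G x) \<le> e" .
      have "(\<Sum>i<n. h *\<^sub>R T i x) - h *\<^sub>R G x = h *\<^sub>R ((\<Sum>i<n. T i x) - G x)"
        by (simp add: scaleR_sum_right scaleR_diff_right)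
      hence "norm ((\<Sum>i<n. h *\<^sub>R T i x) - h *\<^sub>R G x) = \<bar>h\<bar> * norm ((\<Sum>i<n. T i x) - G x)"
        by (metis norm_scaleR real_norm_def)
      also have "\<dots> \<le> \<bar>h\<bar> * e" by (rule mult_left_mono[OF ne abs_ge_zero])
      finally have "norm ((\<Sum>i<n. h *\<^sub>R T i x) - h *\<^sub>R G x) \<le> norm h * e" by simp
      thus "norm ((\<Sum>i<n. h *\<^sub>R T i x) - h *\<^sub>R G x) \<le> e * norm h"
        by (simp only: mult.commute)
    qed
  next
    show "0 \<in> S" unfolding S_def using d0 by simp
  next
    have "summable (\<lambda>n. a n *\<^sub>R mp (M0 + 0 *\<^sub>R Y) n)"
    proof (rule summable_comparison_test[OF _ summable_mult2[OF sa, of "norm (mat 1 :: real^'n^'n)"]])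
      have "norm (a n *\<^sub>R mp (M0 + 0 *\<^sub>R Y) n) \<le> \<bar>a n\<bar> * r ^ n * norm (mat 1 :: real^'n^'n)" for n
      proof -
        have b0: "norm ((M0 + 0 *\<^sub>R Y) *v x) \<le> r * norm x" for x
          using bnd[of 0 x] d0 by simp
        have "norm (mp (M0 + 0 *\<^sub>R Y) n) \<le> r ^ n * norm (mat 1 :: real^'n^'n)"
          by (rule mp_bound[OF b0 sM r0])
        hence "\<bar>a n\<bar> * norm (mp (M0 + 0 *\<^sub>R Y) n) \<le> \<bar>a n\<bar> * (r ^ n * norm (mat 1 :: real^'n^'n))"
          by (rule mult_left_mono) simp
        thus ?thesis by (simp only: norm_scaleR real_norm_def mult.assoc)
      qed
      thus "\<exists>N. \<forall>n\<ge>N. norm (a n *\<^sub>R mp (M0 + 0 *\<^sub>R Y) n) \<le> \<bar>a n\<bar> * r ^ n * norm (mat 1 :: real^'n^'n)"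
        by blast
    qed
    thus "(\<lambda>n. a n *\<^sub>R mp (M0 + 0 *\<^sub>R Y) n) sums (\<Sum>n. a n *\<^sub>R mp (M0 + 0 *\<^sub>R Y) n)"
      by (rule summable_sums)
  qed
  then obtain g where g: "\<And>x. x \<in> S \<Longrightarrow> (\<lambda>n. a n *\<^sub>R mp (M0 + x *\<^sub>R Y) n) sums g x"
    "\<And>x. x \<in> S \<Longrightarrow> (g has_derivative (\<lambda>h. h *\<^sub>R G x)) (at x within S)" by blast
  have "0 \<in> S" "open S" unfolding S_def using d0 by auto
  have "(g has_derivative (\<lambda>h. h *\<^sub>R G 0)) (at 0 within S)" by (rule g(2)[OF \<open>0 \<in> S\<close>])
  hence "(g has_derivative (\<lambda>h. h *\<^sub>R G 0)) (at 0)" by (simp only: at_within_open[OF \<open>0 \<in> S\<close> \<open>open S\<close>])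
  hence "(g has_vector_derivative G 0) (at 0)" by (simp only: has_vector_derivative_def)
  moreover have "\<forall>t\<in>ball 0 \<delta>. (\<lambda>n. a n *\<^sub>R mp (M0 + t *\<^sub>R Y) n) sums g t" using g(1) unfolding S_def by blast
  ultimately show ?thesis by blast
qed

lemma diag_scale: "c *\<^sub>R diag_mat g = diag_mat (\<lambda>i. c * g i)"
  by (simp add: vec_eq_iff diag_mat_def)

lemma diag_add: "diag_mat f + diag_mat g = diag_mat (\<lambda>i. f i + g i)"
  by (simp add: vec_eq_iff diag_mat_def)

lemma diag_one: "diag_mat (\<lambda>i. 1) = mat 1"
  by (simp add: vec_eq_iff diag_mat_def mat_def)

lemma diag_mult: "diag_mat f ** diag_mat g = diag_mat (\<lambda>i. f i * g i)"
  by (simp add: vec_eq_iff mult_diag_right) (simp add: diag_mat_def)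

lemma conj_scale: "c *\<^sub>R ((U::real^'n^'n) ** diag_mat g ** W) = U ** diag_mat (\<lambda>i. c * g i) ** W"
  by (simp add: diag_scale[symmetric] matrix_scalar_ac scalar_matrix_assoc)

lemma conj_add: "(U::real^'n^'n) ** diag_mat f ** W + U ** diag_mat g ** W = U ** diag_mat (\<lambda>i. f i + g i) ** W"
  by (simp add: diag_add[symmetric] matrix_add_ldistrib mm_add_rdistrib)

lemma conj_mult: "orthogonal_matrix U \<Longrightarrow>
  (U ** diag_mat f ** transpose U) ** (U ** diag_mat g ** transpose U) = U ** diag_mat (\<lambda>i. f i * g i) ** transpose U"
  by (simp add: matrix_mul_assoc orth_L1 diag_mult[symmetric])

lemma conj_one: "orthogonal_matrix U \<Longrightarrow> U ** diag_mat (\<lambda>i. 1) ** transpose U = mat 1"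
  by (simp add: diag_one orth_UT)

lemma mpow_eq:
  assumes U: "orthogonal_matrix U" and A: "A = U ** diag_mat d ** transpose U"
  shows "mpow \<theta> A = U ** diag_mat (\<lambda>i. exp (\<theta> * ln (d i))) ** transpose U"
proof -
  have "mlog A = U ** diag_mat (ln \<circ> d) ** transpose U" unfolding mlog_def by (rule spec_fun_eq[OF U A])
  hence "\<theta> *\<^sub>R mlog A = U ** diag_mat (\<lambda>i. \<theta> * ln (d i)) ** transpose U"
    by (simp add: conj_scale comp_def)
  hence "mexp (\<theta> *\<^sub>R mlog A) = U ** diag_mat (exp \<circ> (\<lambda>i. \<theta> * ln (d i))) ** transpose U"
    unfolding mexp_def by (rule spec_fun_eq[OF U])
  thus ?thesis unfolding mpow_def by (simp add: comp_def)
qed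

lemma mpow_add:
  assumes "sym_mat A"
  shows "mpow \<alpha> A ** mpow \<beta> A = mpow (\<alpha> + \<beta>) A"
proof -
  obtain U d where U: "orthogonal_matrix U" and A: "A = U ** diag_mat d ** transpose U"
    using spectral[OF assms] by blast
  show ?thesis unfolding mpow_eq[OF U A] conj_mult[OF U]
    by (simp add: exp_add[symmetric] distrib_right)
qed

lemma mpow_zero:
  assumes "sym_mat A"
  shows "mpow 0 A = mat 1"
proof -
  obtain U d where U: "orthogonal_matrix U" and A: "A = U ** diag_mat d ** transpose U"
    using spectral[OF assms] by blast
  show ?thesis unfolding mpow_eq[OF U A] using conj_one[OF U] by simp
qed

lemma sym_mat_iff: "sym_mat A \<longleftrightarrow> (\<forall>i j. A$j$i = A$i$j)"
  by (auto simp: sym_mat_def vec_eq_iff transpose_def)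

lemma binom_summable:
  fixes r \<theta> :: real
  defines "a \<equiv> \<lambda>n. (\<theta> gchoose n) * (-1) ^ n"
  assumes r0: "0 \<le> r" and r1: "r < 1"
  shows "summable (\<lambda>n. \<bar>a n\<bar> * r ^ n)" "summable (\<lambda>n. \<bar>a n\<bar> * (real n * r ^ (n - 1)))"
proof -
  have conv: "summable (\<lambda>n. a n * y ^ n)" if "norm y < 1" for y :: real
  proof -
    have "\<bar>- y\<bar> < 1" using that by simp
    from gen_binomial_real[OF this, of \<theta>] have "summable (\<lambda>n. (\<theta> gchoose n) * (- y) ^ n)"
      by (rule sums_summable)
    moreover have "(\<theta> gchoose n) * (- y) ^ n = a n * y ^ n" for n
    proof -
      have "(- y) ^ n = ((-1) * y) ^ n" by simp
      also have "\<dots> = (-1) ^ n * y ^ n" by (rule power_mult_distrib)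
      finally show ?thesis unfolding a_def by (simp only: mult.assoc)
    qed
    ultimately show ?thesis by simp
  qed
  define x0 where "x0 = (1 + r) / 2"
  have x0: "norm x0 < 1" "norm r < norm x0" using r0 r1 by (auto simp: x0_def)
  have "summable (\<lambda>n. norm (a n * r ^ n))" by (rule powser_insidea[OF conv[OF x0(1)] x0(2)])
  thus "summable (\<lambda>n. \<bar>a n\<bar> * r ^ n)" using r0 by (simp add: abs_mult)
  have "summable (\<lambda>n. diffs a n * x0 ^ n)" by (rule termdiff_converges[OF x0(1) conv])
  hence "summable (\<lambda>n. norm (diffs a n * r ^ n))" by (rule powser_insidea[OF _ x0(2)])
  moreover have "norm (diffs a n * r ^ n) = \<bar>a (Suc n)\<bar> * (real (Suc n) * r ^ (Suc n - 1))" for n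
    using r0 by (simp add: diffs_def abs_mult)
  ultimately have "summable (\<lambda>n. \<bar>a (Suc n)\<bar> * (real (Suc n) * r ^ (Suc n - 1)))" by simp
  thus "summable (\<lambda>n. \<bar>a n\<bar> * (real n * r ^ (n - 1)))" by (rule summable_Suc_iff[THEN iffD1])
qed

lemma spd_lower:
  fixes S :: "real^'n^'n"
  assumes "spd S"
  shows "\<exists>a>0. \<forall>x. a * norm x ^ 2 \<le> x \<bullet> (S *v x)"
proof -
  define q where "q x = x \<bullet> (S *v x)" for x :: "real^'n"
  have K: "compact (sphere (0::real^'n) 1)" "sphere (0::real^'n) 1 \<noteq> {}"
    using norm_axis_1[of undefined] by auto
  have "continuous_on (sphere 0 1) q" unfolding q_def
    by (intro continuous_intros continuous_on_id linear_continuous_on matrix_vector_mul_linear)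
  then obtain v where v: "v \<in> sphere 0 1" "\<And>y. y \<in> sphere 0 1 \<Longrightarrow> q v \<le> q y"
    using continuous_attains_inf[OF K] by blast
  have "v \<noteq> 0" using v(1) by auto
  hence a0: "q v > 0" using assms unfolding spd_def q_def by blast
  have "q v * norm x ^ 2 \<le> x \<bullet> (S *v x)" for x
  proof (cases "x = 0")
    case True thus ?thesis by simp
  next
    case False
    have "(1/norm x) *\<^sub>R x \<in> sphere 0 1" using False by simp
    hence "q v \<le> q ((1/norm x) *\<^sub>R x)" by (rule v(2))
    also have "q ((1/norm x) *\<^sub>R x) = q x / norm x ^ 2"
      by (simp add: q_def matrix_vector_mult_scaleR power2_eq_square)
    finally show ?thesis using False by (simp add: le_divide_eq q_def)
  qed
  thus ?thesis using a0 by blast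
qed

lemma quad_upper: "\<bar>x \<bullet> (A *v x)\<bar> \<le> norm (A::real^'n^'n) * norm x ^ 2"
proof -
  have "\<bar>x \<bullet> (A *v x)\<bar> \<le> norm x * norm (A *v x)" by (rule Cauchy_Schwarz_ineq2)
  also have "\<dots> \<le> norm x * (norm A * norm x)" by (intro mult_left_mono norm_mv) auto
  finally show ?thesis by (simp add: power2_eq_square mult_ac)
qed

lemma eig_col:
  assumes U: "orthogonal_matrix U" and A: "A = U ** diag_mat d ** transpose U"
  shows "A *v column j U = d j *\<^sub>R column j U" "norm (column j U) = 1"
proof -
  have AU: "A ** U = U ** diag_mat d" using A orth_L1[OF U] by simp
  have "(A *v column j U) $ i = (d j *\<^sub>R column j U) $ i" for i
  proof -
    have "(A *v column j U) $ i = (A ** U) $ i $ j"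
      by (simp add: matrix_matrix_mult_def matrix_vector_mult_def column_def)
    also have "\<dots> = U $ i $ j * d j" by (simp add: AU mult_diag_right)
    finally show ?thesis by (simp add: column_def)
  qed
  thus "A *v column j U = d j *\<^sub>R column j U" by (simp add: vec_eq_iff)
  show "norm (column j U) = 1" using U by (simp add: orthogonal_matrix_orthonormal_columns)
qed

lemma eig_val:
  assumes U: "orthogonal_matrix U" and A: "A = U ** diag_mat d ** transpose U"
  shows "d j = column j U \<bullet> (A *v column j U)"
proof -
  have "column j U \<bullet> column j U = 1" using eig_col(2)[OF U A] by (simp add: dot_square_norm)
  thus ?thesis by (simp add: eig_col(1)[OF U A])
qed

lemma mp_conj:
  assumes U: "orthogonal_matrix U"
  shows "mp (U ** diag_mat x ** transpose U) n = U ** diag_mat (\<lambda>j. x j ^ n) ** transpose U"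
proof (induct n)
  case 0 thus ?case using conj_one[OF U] by simp
next
  case (Suc n) thus ?case by (simp add: conj_mult[OF U])
qed

lemma conj_sums:
  fixes U :: "real^'n^'n"
  assumes U: "orthogonal_matrix U" and s: "\<And>j. (\<lambda>n. a n * x j ^ n) sums h j"
  shows "(\<lambda>n. a n *\<^sub>R (U ** diag_mat (\<lambda>j. x j ^ n) ** transpose U)) sums (U ** diag_mat h ** transpose U)"
proof -
  define L where "L v = U ** diag_mat (\<lambda>j. v $ j) ** transpose U" for v :: "real^'n"
  have "linear L"
    by (rule linearI) (simp_all add: L_def conj_add conj_scale)
  hence bl: "bounded_linear L" by (simp add: linear_conv_bounded_linear)
  have "(\<lambda>n. \<chi> j. a n * x j ^ n) sums (\<chi> j. h j)"
    unfolding sums_def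
  proof (rule vec_tendstoI)
    fix i
    show "((\<lambda>n. (\<Sum>k<n. \<chi> j. a k * x j ^ k) $ i) \<longlongrightarrow> (\<chi> j. h j) $ i) sequentially"
      using s[of i] unfolding sums_def by simp
  qed
  from bounded_linear.sums[OF bl this] show ?thesis
    by (simp add: L_def conj_scale)
qed

lemma mpow_deriv:
  fixes S X :: "real^'n^'n"
  assumes S: "spd S" and X: "sym_mat X"
  shows "\<exists>D. ((\<lambda>t. mpow \<theta> (S + t *\<^sub>R X)) has_vector_derivative D) (at 0)"
proof -
  obtain a where a0: "a > 0" and alow: "\<And>x. a * norm x ^ 2 \<le> x \<bullet> (S *v x)"
    using spd_lower[OF S] by blast
  have sS: "sym_mat S" using S by (simp add: spd_def)
  define b where "b = norm S"
  have bup: "x \<bullet> (S *v x) \<le> b * norm x ^ 2" for x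
    using quad_upper[of x S] unfolding b_def by simp
  have ab: "a \<le> b"
  proof -
    have "a * norm (axis undefined 1 :: real^'n) ^ 2 \<le> b * norm (axis undefined 1 :: real^'n) ^ 2"
      using alow bup order_trans by blast
    thus ?thesis by (simp add: norm_axis_1)
  qed
  define c where "c = b + a / 2"
  have c0: "c > 0" using a0 ab unfolding c_def by simp
  define \<delta> where "\<delta> = a / (2 * (norm X + 1))"
  have nX: "norm X + 1 > 0" by (simp add: add_nonneg_pos)
  have d0: "\<delta> > 0" using a0 nX unfolding \<delta>_def by (intro divide_pos_pos mult_pos_pos) auto
  define r where "r = 1 - a / (2 * c)"
  have r0: "0 \<le> r" and r1: "r < 1"
  proof -
    have "a / (2 * c) \<le> 1" using a0 ab c0 unfolding c_def by (simp add: divide_le_eq)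
    moreover have "a / (2 * c) > 0" using a0 c0 by simp
    ultimately show "0 \<le> r" "r < 1" unfolding r_def by auto
  qed
  have ray: "a / 2 * norm x ^ 2 \<le> x \<bullet> ((S + t *\<^sub>R X) *v x) \<and> x \<bullet> ((S + t *\<^sub>R X) *v x) \<le> c * norm x ^ 2"
    if t: "t \<in> ball 0 \<delta>" for t x
  proof -
    have tX: "\<bar>t\<bar> * norm X \<le> a / 2"
    proof -
      have "\<bar>t\<bar> < \<delta>" using t by simp
      hence "\<bar>t\<bar> * (norm X + 1) \<le> \<delta> * (norm X + 1)" by (intro mult_right_mono) auto
      also have "\<delta> * (norm X + 1) = a / 2" unfolding \<delta>_def using nX by (simp add: field_simps)
      finally show ?thesis by (simp add: distrib_left)
    qed
    have "\<bar>t * (x \<bullet> (X *v x))\<bar> \<le> \<bar>t\<bar> * (norm X * norm x ^ 2)"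
      unfolding abs_mult by (intro mult_left_mono quad_upper) auto
    also have "\<dots> = (\<bar>t\<bar> * norm X) * norm x ^ 2" by (simp only: mult.assoc)
    also have "\<dots> \<le> a / 2 * norm x ^ 2" using tX by (rule mult_right_mono) simp
    finally have h: "\<bar>t * (x \<bullet> (X *v x))\<bar> \<le> a / 2 * norm x ^ 2" .
    have e: "x \<bullet> ((S + t *\<^sub>R X) *v x) = x \<bullet> (S *v x) + t * (x \<bullet> (X *v x))"
      by (simp add: matrix_vector_mult_add_rdistrib inner_add_right scaleR_matrix_vector_assoc[symmetric])
    show ?thesis unfolding e using h alow[of x] bup[of x] unfolding c_def by (auto simp: algebra_simps)
  qed
  define M0 where "M0 = mat 1 - (1 / c) *\<^sub>R S"
  define Y where "Y = (- (1 / c)) *\<^sub>R X"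
  have Mt: "M0 + t *\<^sub>R Y = mat 1 - (1 / c) *\<^sub>R (S + t *\<^sub>R X)" for t
    unfolding M0_def Y_def by (simp add: algebra_simps)
  have sM: "sym_mat (M0 + t *\<^sub>R Y)" for t
    using sS X unfolding Mt sym_mat_iff by (simp add: mat_def)
  have Mray: "\<bar>x \<bullet> ((M0 + t *\<^sub>R Y) *v x)\<bar> \<le> r * norm x ^ 2" if t: "t \<in> ball 0 \<delta>" for t x
  proof -
    have e: "x \<bullet> ((M0 + t *\<^sub>R Y) *v x) = norm x ^ 2 - x \<bullet> ((S + t *\<^sub>R X) *v x) / c"
      unfolding Mt by (simp add: matrix_vector_mult_diff_rdistrib inner_diff_right dot_square_norm
          scaleR_matrix_vector_assoc[symmetric] divide_inverse mult.commute)
    define q where "q = x \<bullet> ((S + t *\<^sub>R X) *v x)"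
    define n where "n = norm x ^ 2"
    have qb: "a / 2 * n \<le> q" "q \<le> c * n" using ray[OF t, of x] unfolding q_def n_def by auto
    have h1: "a / 2 * n / c \<le> q / c" by (rule divide_right_mono) (use qb c0 in auto)
    have h2: "q / c \<le> n" using qb c0 by (simp add: divide_le_eq mult.commute)
    have h3: "a / 2 * n / c = (1 - r) * n" unfolding r_def using c0 by (simp add: field_simps)
    have h4: "0 \<le> r * n" unfolding n_def using r0 by simp
    have "\<bar>n - q / c\<bar> \<le> r * n" using h1 h2 h3 h4 by (simp add: abs_le_iff algebra_simps)
    thus ?thesis unfolding e q_def n_def .
  qed
  have bnd: "norm ((M0 + t *\<^sub>R Y) *v x) \<le> r * norm x" if "t \<in> ball 0 \<delta>" for t x
    by (rule polar_bound[OF sM Mray[OF that]])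
  define co where "co = (\<lambda>n. (\<theta> gchoose n) * (-1) ^ n :: real)"
  obtain g D where g: "\<forall>t\<in>ball 0 \<delta>. (\<lambda>n. co n *\<^sub>R mp (M0 + t *\<^sub>R Y) n) sums g t"
    and gD: "(g has_vector_derivative D) (at 0)"
  proof -
    have sa: "summable (\<lambda>n. \<bar>co n\<bar> * r ^ n)" using binom_summable(1)[OF r0 r1, of \<theta>] unfolding co_def .
    have sd: "summable (\<lambda>n. \<bar>co n\<bar> * (real n * r ^ (n - 1)))"
      using binom_summable(2)[OF r0 r1, of \<theta>] unfolding co_def .
    have "\<exists>g D. (\<forall>t\<in>ball 0 \<delta>. (\<lambda>n. co n *\<^sub>R mp (M0 + t *\<^sub>R Y) n) sums g t) \<and> (g has_vector_derivative D) (at 0)"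
      by (rule series_deriv[of \<delta> r M0 Y co, OF d0 r0 sM bnd sa sd])
    thus ?thesis using that by blast
  qed
  have eq: "mpow \<theta> (S + t *\<^sub>R X) = c powr \<theta> *\<^sub>R g t" if t: "t \<in> ball 0 \<delta>" for t
  proof -
    have sA: "sym_mat (S + t *\<^sub>R X)" using sS X unfolding sym_mat_iff by simp
    obtain U dv where U: "orthogonal_matrix U" and A: "S + t *\<^sub>R X = U ** diag_mat dv ** transpose U"
      using spectral[OF sA] by blast
    define x where "x j = 1 - dv j / c" for j
    have dvb: "a / 2 \<le> dv j \<and> dv j \<le> c" for j
      using ray[OF t, of "column j U"] eig_val[OF U A, of j] eig_col(2)[OF U A, of j] by simp
    have x01: "0 \<le> x j \<and> x j < 1" for j
      using dvb[of j] c0 a0 unfolding x_def by (auto simp: divide_le_eq)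
    have dvx: "dv j = c * (1 - x j)" for j unfolding x_def using c0 by simp
    have "M0 + t *\<^sub>R Y = U ** diag_mat (\<lambda>j. 1) ** transpose U + (- (1 / c)) *\<^sub>R (U ** diag_mat dv ** transpose U)"
      unfolding Mt A[symmetric] conj_one[OF U] by simp
    also have "\<dots> = U ** diag_mat x ** transpose U"
      unfolding conj_scale conj_add x_def by simp
    finally have MU: "M0 + t *\<^sub>R Y = U ** diag_mat x ** transpose U" .
    have bs: "(\<lambda>n. co n * x j ^ n) sums ((1 - x j) powr \<theta>)" for j
    proof -
      have "\<bar>- x j\<bar> < 1" using x01[of j] by simp
      from gen_binomial_real[OF this, of \<theta>]
      have s1: "(\<lambda>n. (\<theta> gchoose n) * (- x j) ^ n) sums ((1 - x j) powr \<theta>)"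
        by (simp only: add_uminus_conv_diff)
      have "(\<theta> gchoose n) * (- x j) ^ n = co n * x j ^ n" for n
      proof -
        have "(- x j) ^ n = ((-1) * x j) ^ n" by simp
        also have "\<dots> = (-1) ^ n * x j ^ n" by (rule power_mult_distrib)
        finally show ?thesis unfolding co_def by (simp only: mult.assoc)
      qed
      hence "(\<lambda>n. (\<theta> gchoose n) * (- x j) ^ n) = (\<lambda>n. co n * x j ^ n)" by (rule ext)
      with s1 show ?thesis by (simp only:)
    qed
    have "(\<lambda>n. co n *\<^sub>R mp (M0 + t *\<^sub>R Y) n) sums (U ** diag_mat (\<lambda>j. (1 - x j) powr \<theta>) ** transpose U)"
      unfolding MU mp_conj[OF U] by (rule conj_sums[OF U bs])
    hence gt: "g t = U ** diag_mat (\<lambda>j. (1 - x j) powr \<theta>) ** transpose U"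
      using g t sums_unique2 by blast
    have "exp (\<theta> * ln (dv j)) = c powr \<theta> * (1 - x j) powr \<theta>" for j
    proof -
      have pos: "dv j > 0" "1 - x j > 0" using dvb[of j] a0 x01[of j] by auto
      have "exp (\<theta> * ln (dv j)) = dv j powr \<theta>" using pos by (simp add: powr_def mult.commute)
      also have "\<dots> = c powr \<theta> * (1 - x j) powr \<theta>" unfolding dvx using c0 pos by (simp add: powr_mult)
      finally show ?thesis .
    qed
    hence "mpow \<theta> (S + t *\<^sub>R X) = U ** diag_mat (\<lambda>j. c powr \<theta> * (1 - x j) powr \<theta>) ** transpose U"
      by (simp add: mpow_eq[OF U A])
    also have "\<dots> = c powr \<theta> *\<^sub>R g t" unfolding gt conj_scale ..
    finally show ?thesis .
  qed
  have "((\<lambda>t. c powr \<theta> *\<^sub>R g t) has_vector_derivative c powr \<theta> *\<^sub>R D) (at 0)"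
    by (rule bounded_linear.has_vector_derivative[OF bounded_linear_scaleR_right gD])
  hence "((\<lambda>t. mpow \<theta> (S + t *\<^sub>R X)) has_vector_derivative c powr \<theta> *\<^sub>R D) (at 0)"
    by (rule has_vector_derivative_transform_within_open[where S="ball 0 \<delta>"]) (use d0 eq in auto)
  thus ?thesis by blast
qed

lemma dphi_eq:
  assumes th: "\<theta> \<noteq> 0" and D: "((\<lambda>t. mpow \<theta> (S + t *\<^sub>R X)) has_vector_derivative D) (at 0)"
  shows "dphi \<theta> S X = (1 / \<theta>) *\<^sub>R D"
proof -
  have "((\<lambda>t. (1 / \<theta>) *\<^sub>R mpow \<theta> (S + t *\<^sub>R X)) has_vector_derivative (1 / \<theta>) *\<^sub>R D) (at 0)"
    by (rule bounded_linear.has_vector_derivative[OF bounded_linear_scaleR_right D])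
  moreover have "(\<lambda>t. (1 / \<theta>) *\<^sub>R mpow \<theta> (S + t *\<^sub>R X)) = (\<lambda>t. phi \<theta> (S + t *\<^sub>R X))"
    using th by (simp add: phi_def)
  ultimately have d: "((\<lambda>t. phi \<theta> (S + t *\<^sub>R X)) has_vector_derivative (1 / \<theta>) *\<^sub>R D) (at 0)" by simp
  show ?thesis unfolding dphi_def
  proof (rule the_equality)
    show "((\<lambda>t. phi \<theta> (S + t *\<^sub>R X)) has_vector_derivative (1 / \<theta>) *\<^sub>R D) (at 0)" by (rule d)
  next
    fix D' assume "((\<lambda>t. phi \<theta> (S + t *\<^sub>R X)) has_vector_derivative D') (at 0)"
    thus "D' = (1 / \<theta>) *\<^sub>R D" by (rule vector_derivative_unique_at[OF _ d])
  qed
qed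

lemma dphi_neg:
  fixes S X :: "real^'n^'n"
  assumes S: "spd S" and X: "sym_mat X"
  shows "dphi (-\<theta>) S X = mpow (-\<theta>) S ** dphi \<theta> S X ** mpow (-\<theta>) S"
proof (cases "\<theta> = 0")
  case True
  have sS: "sym_mat S" using S by (simp add: spd_def)
  show ?thesis using True by (simp add: mpow_zero[OF sS])
next
  case False
  have sS: "sym_mat S" using S by (simp add: spd_def)
  obtain Dp where Dp: "((\<lambda>t. mpow \<theta> (S + t *\<^sub>R X)) has_vector_derivative Dp) (at 0)"
    using mpow_deriv[OF S X] by blast
  obtain Dm where Dm: "((\<lambda>t. mpow (-\<theta>) (S + t *\<^sub>R X)) has_vector_derivative Dm) (at 0)"
    using mpow_deriv[OF S X] by blast
  define P where "P = mpow \<theta> S"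
  define Q where "Q = mpow (-\<theta>) S"
  have "((\<lambda>t. mpow \<theta> (S + t *\<^sub>R X) ** mpow (-\<theta>) (S + t *\<^sub>R X)) has_vector_derivative
      (mpow \<theta> (S + 0 *\<^sub>R X) ** Dm + Dp ** mpow (-\<theta>) (S + 0 *\<^sub>R X))) (at 0)"
    by (rule bounded_bilinear.has_vector_derivative[OF mm_bilinear Dp Dm])
  hence d1: "((\<lambda>t. mpow \<theta> (S + t *\<^sub>R X) ** mpow (-\<theta>) (S + t *\<^sub>R X)) has_vector_derivative
      (P ** Dm + Dp ** Q)) (at 0)" by (simp add: P_def Q_def)
  have "(\<lambda>t. mpow \<theta> (S + t *\<^sub>R X) ** mpow (-\<theta>) (S + t *\<^sub>R X)) = (\<lambda>t. mat 1)"
  proof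
    fix t
    have sA: "sym_mat (S + t *\<^sub>R X)" using sS X unfolding sym_mat_iff by simp
    show "mpow \<theta> (S + t *\<^sub>R X) ** mpow (-\<theta>) (S + t *\<^sub>R X) = mat 1"
      by (simp add: mpow_add[OF sA] mpow_zero[OF sA])
  qed
  hence d0: "((\<lambda>t. mpow \<theta> (S + t *\<^sub>R X) ** mpow (-\<theta>) (S + t *\<^sub>R X)) has_vector_derivative 0) (at 0)"
    by simp
  have e: "P ** Dm + Dp ** Q = 0" by (rule vector_derivative_unique_at[OF d1 d0])
  have QP: "Q ** P = mat 1" unfolding P_def Q_def by (simp add: mpow_add[OF sS] mpow_zero[OF sS])
  have "P ** Dm = (-1) *\<^sub>R (Dp ** Q)" using e by (simp add: eq_neg_iff_add_eq_0)
  hence "Q ** (P ** Dm) = Q ** ((-1) *\<^sub>R (Dp ** Q))" by simp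
  also have "\<dots> = (-1) *\<^sub>R (Q ** (Dp ** Q))" by (metis matrix_scalar_ac scalar_matrix_assoc)
  also have "Q ** (P ** Dm) = Dm" by (simp add: matrix_mul_assoc QP)
  finally have Dm_eq: "Dm = (-1) *\<^sub>R (Q ** Dp ** Q)" by (simp only: matrix_mul_assoc)
  have "dphi (-\<theta>) S X = (1 / (-\<theta>)) *\<^sub>R Dm" by (rule dphi_eq[OF _ Dm]) (use False in simp)
  also have "\<dots> = (1 / \<theta>) *\<^sub>R (Q ** Dp ** Q)" unfolding Dm_eq by simp
  also have "\<dots> = Q ** ((1 / \<theta>) *\<^sub>R Dp) ** Q" by (simp add: matrix_scalar_ac scalar_matrix_assoc)
  also have "(1 / \<theta>) *\<^sub>R Dp = dphi \<theta> S X" by (rule dphi_eq[OF False Dp, symmetric])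
  finally show ?thesis unfolding Q_def .
qed

lemma PP0:
  assumes "sym_mat S" and "a + b = c"
  shows "mpow a S ** mpow b S = mpow c S"
  using mpow_add[OF assms(1)] assms(2) by simp

lemma PPL:
  assumes "sym_mat S" and "a + b = c"
  shows "Z ** mpow a S ** mpow b S = Z ** mpow c S"
  by (metis PP0[OF assms] matrix_mul_assoc)

lemma gA_neg1:
  fixes S X Y :: "real^'n^'n"
  assumes S: "spd S" and X: "sym_mat X"
  shows "gA (-\<theta>1) \<theta>2 S X Y = gA \<theta>1 \<theta>2 S X Y"
proof -
  have sS: "sym_mat S" using S by (simp add: spd_def)
  define t' where "t' = (-\<theta>1 + \<theta>2) / 2"
  define t where "t = (\<theta>1 + \<theta>2) / 2"
  define D1 where "D1 = dphi \<theta>1 S X"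
  define D2 where "D2 = dphi \<theta>2 S Y"
  have "gA (-\<theta>1) \<theta>2 S X Y = trace (mpow (-t') S ** (mpow (-\<theta>1) S ** D1 ** mpow (-\<theta>1) S) ** mpow (-t') S ** D2)"
    unfolding gA_def Let_def t'_def D1_def D2_def dphi_neg[OF S X] ..
  also have "\<dots> = trace (mpow (-t') S ** mpow (-\<theta>1) S ** D1 ** mpow (-\<theta>1) S ** mpow (-t') S ** D2)"
    by (simp only: matrix_mul_assoc)
  also have "\<dots> = trace (mpow (-t) S ** D1 ** mpow (-t) S ** D2)"
  proof -
    have e1: "mpow (-t') S ** mpow (-\<theta>1) S = mpow (-t) S" by (rule PP0[OF sS]) (simp add: t_def t'_def field_simps)
    have e2: "Z ** mpow (-\<theta>1) S ** mpow (-t') S = Z ** mpow (-t) S" for Z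
      by (rule PPL[OF sS]) (simp add: t_def t'_def field_simps)
    show ?thesis by (simp only: e1 e2)
  qed
  also have "\<dots> = gA \<theta>1 \<theta>2 S X Y" unfolding gA_def Let_def t_def D1_def D2_def ..
  finally show ?thesis .
qed

lemma gA_neg2:
  fixes S X Y :: "real^'n^'n"
  assumes S: "spd S" and Y: "sym_mat Y"
  shows "gA \<theta>1 (-\<theta>2) S X Y = gA \<theta>1 \<theta>2 S X Y"
proof -
  have sS: "sym_mat S" using S by (simp add: spd_def)
  define t' where "t' = (\<theta>1 + - \<theta>2) / 2"
  define t where "t = (\<theta>1 + \<theta>2) / 2"
  define D1 where "D1 = dphi \<theta>1 S X"
  define D2 where "D2 = dphi \<theta>2 S Y"
  have "gA \<theta>1 (-\<theta>2) S X Y = trace (mpow (-t') S ** D1 ** mpow (-t') S ** (mpow (-\<theta>2) S ** D2 ** mpow (-\<theta>2) S))"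
    unfolding gA_def Let_def t'_def D1_def D2_def dphi_neg[OF S Y] ..
  also have "\<dots> = trace (mpow (-t') S ** D1 ** mpow (-t') S ** mpow (-\<theta>2) S ** D2 ** mpow (-\<theta>2) S)"
    by (simp only: matrix_mul_assoc)
  also have "\<dots> = trace (mpow (-t') S ** D1 ** mpow (-t) S ** D2 ** mpow (-\<theta>2) S)"
  proof -
    have e2: "Z ** mpow (-t') S ** mpow (-\<theta>2) S = Z ** mpow (-t) S" for Z
      by (rule PPL[OF sS]) (simp add: t_def t'_def field_simps)
    show ?thesis by (simp only: e2)
  qed
  also have "\<dots> = trace (mpow (-\<theta>2) S ** (mpow (-t') S ** D1 ** mpow (-t) S ** D2))"
    by (rule trace_mul_sym)
  also have "\<dots> = trace (mpow (-\<theta>2) S ** mpow (-t') S ** D1 ** mpow (-t) S ** D2)"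
    by (simp only: matrix_mul_assoc)
  also have "\<dots> = trace (mpow (-t) S ** D1 ** mpow (-t) S ** D2)"
  proof -
    have e1: "mpow (-\<theta>2) S ** mpow (-t') S = mpow (-t) S" by (rule PP0[OF sS]) (simp add: t_def t'_def field_simps)
    show ?thesis by (simp only: e1)
  qed
  also have "\<dots> = gA \<theta>1 \<theta>2 S X Y" unfolding gA_def Let_def t_def D1_def D2_def ..
  finally show ?thesis .
qed

theorem mainTheorem11:
  fixes \<theta>1 \<theta>2 s1 s2 :: real and S X Y :: "real^'n^'n"
  assumes "spd S" and "sym_mat X" and "sym_mat Y"
    and "s1 \<in> {1, -1}" and "s2 \<in> {1, -1}"
  shows "gA \<theta>1 \<theta>2 S X Y = gA (s1 * \<theta>1) (s2 * \<theta>2) S X Y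
    \<and> gA \<theta>1 (-\<theta>1) S X Y = gE \<theta>1 (-\<theta>1) S X Y
    \<and> gE \<theta>1 (-\<theta>1) S X Y = gA1 \<theta>1 S X Y"
proof (intro conjI)
  note S = assms(1) and X = assms(2) and Y = assms(3)
  have sS: "sym_mat S" using S by (simp add: spd_def)
  have n1: "gA a b S X Y = gA (-a) b S X Y" for a b using gA_neg1[OF S X, of a b] by simp
  have n2: "gA a b S X Y = gA a (-b) S X Y" for a b using gA_neg2[OF S Y, of a b] by simp
  show "gA \<theta>1 \<theta>2 S X Y = gA (s1 * \<theta>1) (s2 * \<theta>2) S X Y"
    using assms(4,5) n1 n2 by auto
  define D1 where "D1 = dphi \<theta>1 S X"
  define D2 where "D2 = dphi \<theta>1 S Y"
  have "gA \<theta>1 (-\<theta>1) S X Y = trace (mpow (-0) S ** D1 ** mpow (-0) S ** dphi (-\<theta>1) S Y)"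
    unfolding gA_def Let_def D1_def by simp
  also have "\<dots> = gE \<theta>1 (-\<theta>1) S X Y" unfolding gE_def D1_def by (simp add: mpow_zero[OF sS])
  finally show "gA \<theta>1 (-\<theta>1) S X Y = gE \<theta>1 (-\<theta>1) S X Y" .
  have "gE \<theta>1 (-\<theta>1) S X Y = trace (D1 ** (mpow (-\<theta>1) S ** D2 ** mpow (-\<theta>1) S))"
    unfolding gE_def D1_def D2_def dphi_neg[OF S Y] ..
  also have "\<dots> = trace ((D1 ** mpow (-\<theta>1) S ** D2) ** mpow (-\<theta>1) S)"
    by (simp only: matrix_mul_assoc)
  also have "\<dots> = trace (mpow (-\<theta>1) S ** (D1 ** mpow (-\<theta>1) S ** D2))"
    by (rule trace_mul_sym)
  also have "\<dots> = trace (mpow (-((\<theta>1 + \<theta>1) / 2)) S ** D1 ** mpow (-((\<theta>1 + \<theta>1) / 2)) S ** D2)"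
    by (simp add: matrix_mul_assoc)
  also have "\<dots> = gA1 \<theta>1 S X Y" unfolding gA1_def gA_def Let_def D1_def D2_def ..
  finally show "gE \<theta>1 (-\<theta>1) S X Y = gA1 \<theta>1 S X Y" .
qed

end
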